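(* Suppose an SCC $F:\Theta\to 2^Z\setminus\{\emptyset\}$ is pure-Nash-implemented by $\mathcal M=\langle M,g\rangle$. Then $g(M)\subseteq\Delta(Z^* )$.
   Context: Standing setup: $\mathcal I=\{1,\dots,I\}$ finite, $I\ge 3$; $\Theta$ finite or countably infinite; $Z$ finite; $Y=\Delta(Z)$; $u_i^\theta:Z\to\mathbb R$, $U_i^\theta(y)=\sum_zy_zu_i^\theta(z)$. A mechanism $\mathcal M=\langle M=\times_iM_i,g:M\to Y\rangle$ has countable $M_i$; $PNE^{(\mathcal M,\theta)}$ is the set of pure Nash equilibria at $\theta$. $F$ is pure-Nash-implemented by $\mathcal M$ if $\bigcup_{m\in PNE^{(\mathcal M,\theta)}}\mathrm{SUPP}(g[m])=F(\theta)$ for all $\theta$. A nonempty $E\subseteq Z$ is an $i$-$\theta$-max set if $E\subseteq\arg\max_{z\in E}u_i^\theta(z)$ and $E\subseteq\arg\max_{z\in Z}u_j^\theta(z)$ for all $j\ne i$; an $i$-max set if it is such for some $\theta$. $Z^*=\bigcup_{\theta\in\Theta}F(\theta)$ if $Z$ is an $i$-max set for some $i\in\mathcal I$, and $Z^*=Z$ otherwise. *)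

theory Defs
  imports "HOL-Probability.Probability_Mass_Function"
begin

definition exp_util :: "('i \<Rightarrow> 'th \<Rightarrow> 'z::finite \<Rightarrow> real) \<Rightarrow> 'i \<Rightarrow> 'th \<Rightarrow> 'z pmf \<Rightarrow> real" where
  "exp_util u i th y = (\<Sum>z\<in>UNIV. pmf y z * u i th z)"

definition argmax_on :: "('a \<Rightarrow> real) \<Rightarrow> 'a set \<Rightarrow> 'a set" where
  "argmax_on f A = {x \<in> A. \<forall>y\<in>A. f y \<le> f x}"

definition profiles :: "('i \<Rightarrow> 'm set) \<Rightarrow> ('i \<Rightarrow> 'm) set" where
  "profiles Mi = {m. \<forall>i. m i \<in> Mi i}"

definition PNE :: "('i \<Rightarrow> 'th \<Rightarrow> 'z::finite \<Rightarrow> real) \<Rightarrow> ('i \<Rightarrow> 'm set) \<Rightarrow> (('i \<Rightarrow> 'm) \<Rightarrow> 'z pmf) \<Rightarrow> 'th \<Rightarrow> ('i \<Rightarrow> 'm) set" where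
  "PNE u Mi g th = {m \<in> profiles Mi. \<forall>i. \<forall>mi \<in> Mi i.
      exp_util u i th (g (m(i := mi))) \<le> exp_util u i th (g m)}"

definition pure_nash_implements ::
  "('i \<Rightarrow> 'th \<Rightarrow> 'z::finite \<Rightarrow> real) \<Rightarrow> ('th \<Rightarrow> 'z set) \<Rightarrow> ('i \<Rightarrow> 'm set) \<Rightarrow> (('i \<Rightarrow> 'm) \<Rightarrow> 'z pmf) \<Rightarrow> bool" where
  "pure_nash_implements u F Mi g \<longleftrightarrow>
     (\<forall>th. (\<Union>m\<in>PNE u Mi g th. set_pmf (g m)) = F th)"

definition is_max_set_at :: "('i \<Rightarrow> 'th \<Rightarrow> 'z \<Rightarrow> real) \<Rightarrow> 'i \<Rightarrow> 'th \<Rightarrow> 'z set \<Rightarrow> bool" where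
  "is_max_set_at u i th E \<longleftrightarrow> E \<noteq> {} \<and> E \<subseteq> argmax_on (u i th) E \<and>
     (\<forall>j. j \<noteq> i \<longrightarrow> E \<subseteq> argmax_on (u j th) UNIV)"

definition is_max_set :: "('i \<Rightarrow> 'th \<Rightarrow> 'z \<Rightarrow> real) \<Rightarrow> 'i \<Rightarrow> 'z set \<Rightarrow> bool" where
  "is_max_set u i E \<longleftrightarrow> (\<exists>th. is_max_set_at u i th E)"

definition Zstar :: "('i \<Rightarrow> 'th \<Rightarrow> 'z \<Rightarrow> real) \<Rightarrow> ('th \<Rightarrow> 'z set) \<Rightarrow> 'z set" where
  "Zstar u F = (if \<exists>i. is_max_set u i UNIV then (\<Union>th. F th) else UNIV)"

end

theory Submission
  imports Defs
begin

lemma const_exp: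
  fixes u :: "'i \<Rightarrow> 'th \<Rightarrow> 'z::finite \<Rightarrow> real"
  assumes "\<And>z. u i th z = c"
  shows "exp_util u i th y = c"
proof -
  have "exp_util u i th y = (\<Sum>z\<in>UNIV. pmf y z) * c"
    unfolding exp_util_def using assms by (simp add: sum_distrib_right)
  also have "(\<Sum>z\<in>UNIV. pmf y z) = 1"
    using sum_pmf_eq_1[of UNIV y] by simp
  finally show ?thesis by simp
qed

theorem lemma6:
  fixes u :: "'i::finite \<Rightarrow> 'th::countable \<Rightarrow> 'z::finite \<Rightarrow> real"
    and F :: "'th \<Rightarrow> 'z set"
    and Mi :: "'i \<Rightarrow> 'm set"
    and g :: "('i \<Rightarrow> 'm) \<Rightarrow> 'z pmf"
  assumes "CARD('i) \<ge> 3"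
    and "\<And>i. countable (Mi i)"
    and "\<And>th. F th \<noteq> {}"
    and "pure_nash_implements u F Mi g"
  shows "\<forall>m \<in> profiles Mi. set_pmf (g m) \<subseteq> Zstar u F"
proof (cases "\<exists>i. is_max_set u i UNIV")
  case False
  then show ?thesis by (simp add: Zstar_def)
next
  case True
  then obtain i th where h: "is_max_set_at u i th UNIV" unfolding is_max_set_def by blast
  have cst: "\<And>j z. u j th z = u j th undefined"
  proof -
    fix j z
    have "UNIV \<subseteq> argmax_on (u j th) UNIV"
      using h unfolding is_max_set_at_def by (cases "j = i") auto
    hence "u j th undefined \<le> u j th z" "u j th z \<le> u j th undefined"
      unfolding argmax_on_def by auto
    thus "u j th z = u j th undefined" by simp
  qed
  have eq: "\<And>j y. exp_util u j th y = u j th undefined"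
    by (rule const_exp) (rule cst)
  show ?thesis
  proof
    fix m assume m: "m \<in> profiles Mi"
    hence "m \<in> PNE u Mi g th" unfolding PNE_def by (simp add: eq)
    hence "set_pmf (g m) \<subseteq> F th"
      using assms(4) unfolding pure_nash_implements_def by blast
    thus "set_pmf (g m) \<subseteq> Zstar u F" using True by (auto simp: Zstar_def)
  qed
qed

end
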